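(* Let $J\ge p\ge 1$, $\sigma_\varepsilon^2>0$, $I>0$, let $\mathbf{\Sigma}_\gamma$ be a nonnegative definite symmetric $J\times J$ matrix, and let $\mathbf{A}_{\bm\beta}$ be a real $J\times p$ matrix of full column rank $p$. For an approximate design $\xi=(I_1,\dots,I_J)$ (reals $I_j\ge0$, $\sum_jI_j=I$) put $\mathbf{M}_0(\xi)=\mathrm{diag}(I_1,\dots,I_J)$, $\mathbf{M}_0(\xi)^{1/2}=\mathrm{diag}(\sqrt{I_1},\dots,\sqrt{I_J})$, $$\mathbf{M}_{\bm\beta}(\xi)=\mathbf{A}_{\bm\beta}^{\mathrm T}\mathbf{M}_0(\xi)^{1/2}\big(\sigma_\varepsilon^2\mathbf{I}_J+\mathbf{M}_0(\xi)^{1/2}\mathbf{\Sigma}_\gamma\mathbf{M}_0(\xi)^{1/2}\big)^{-1}\mathbf{M}_0(\xi)^{1/2}\mathbf{A}_{\bm\beta},$$ and let $\psi_j(\xi)$ be the $j$th diagonal entry of $\big(\sigma_\varepsilon^2\mathbf{I}_J+\mathbf{\Sigma}_\gamma\mathbf{M}_0(\xi)\big)^{-1}\mathbf{A}_{\bm\beta}\mathbf{M}_{\bm\beta}(\xi)^{-1}\mathbf{A}_{\bm\beta}^{\mathrm T}\big(\sigma_\varepsilon^2\mathbf{I}_J+\mathbf{M}_0(\xi)\mathbf{\Sigma}_\gamma\big)^{-1}$. Let $\xi^*=(I_1^*,\dots,I_J^* )$ be fully supported, i.e. $I_j^*>0$ for all $j$. Then $\xi^*$ is locally $D$-optimal if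 and only if the values $I\psi_j(\xi^* )$, $j=1,\dots,J$, are all equal.
   Context: $\mathbf{A}_{\bm\beta}$ is the Jacobian of the mean response curve at a fixed nominal parameter $\bm\beta\in\mathbb{R}^p$ over $J$ fixed time points. $\bm\beta$ is estimable under $\xi$ if $\mathbf{A}_{\bm\beta}$ has full column rank $p$ and its columns lie in the column space of $\mathbf{M}_0(\xi)$. A design $\xi^*$ is locally $D$-optimal if $\log\det\mathbf{M}_{\bm\beta}(\xi^* )\ge\log\det\mathbf{M}_{\bm\beta}(\xi)$ for all approximate designs $\xi$ with total $I$ under which $\bm\beta$ is estimable. *)

theory Defs
  imports "HOL-Analysis.Analysis"
begin

text \<open>Time points are indexed by the finite type 'j (J = CARD('j)),
parameters by the finite type 'p (p = CARD('p)).
An approximate design is a vector xi of weights I_1..I_J.\<close>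

definition diag_mat :: "real^'j \<Rightarrow> real^'j^'j" where
  "diag_mat v = (\<chi> i k. if i = k then v $ i else 0)"

definition M0 :: "real^'j \<Rightarrow> real^'j^'j" where
  "M0 xi = diag_mat xi"

definition M0_sqrt :: "real^'j \<Rightarrow> real^'j^'j" where
  "M0_sqrt xi = diag_mat (\<chi> i. sqrt (xi $ i))"

definition is_design :: "real \<Rightarrow> real^'j \<Rightarrow> bool" where
  "is_design I xi \<longleftrightarrow> (\<forall>j. xi $ j \<ge> 0) \<and> (\<Sum>j\<in>UNIV. xi $ j) = I"

definition M_beta :: "real \<Rightarrow> real^'j^'j \<Rightarrow> real^'p^'j \<Rightarrow> real^'j \<Rightarrow> real^'p^'p" where
  "M_beta s2 Sig A xi =
     transpose A ** M0_sqrt xi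
       ** matrix_inv (s2 *\<^sub>R mat 1 + M0_sqrt xi ** Sig ** M0_sqrt xi)
       ** M0_sqrt xi ** A"

definition psi :: "real \<Rightarrow> real^'j^'j \<Rightarrow> real^'p^'j \<Rightarrow> real^'j \<Rightarrow> 'j \<Rightarrow> real" where
  "psi s2 Sig A xi j =
     (matrix_inv (s2 *\<^sub>R mat 1 + Sig ** M0 xi) ** A ** matrix_inv (M_beta s2 Sig A xi)
        ** transpose A ** matrix_inv (s2 *\<^sub>R mat 1 + M0 xi ** Sig)) $ j $ j"

definition estimable :: "real^'p^'j \<Rightarrow> real^'j \<Rightarrow> bool" where
  "estimable A xi \<longleftrightarrow> rank A = CARD('p) \<and> columns A \<subseteq> span (columns (M0 xi))"

definition locally_D_optimal ::
  "real \<Rightarrow> real^'j^'j \<Rightarrow> real^'p^'j \<Rightarrow> real \<Rightarrow> real^'j \<Rightarrow> bool" where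
  "locally_D_optimal s2 Sig A I xs \<longleftrightarrow>
     is_design I xs \<and> estimable A xs \<and>
     (\<forall>xi. is_design I xi \<and> estimable A xi \<longrightarrow>
        ln (det (M_beta s2 Sig A xs)) \<ge> ln (det (M_beta s2 Sig A xi)))"

end

theory Submission
  imports Defs
begin

definition posdef :: "real^'n^'n \<Rightarrow> bool" where
  "posdef X \<longleftrightarrow> transpose X = X \<and> (\<forall>u. u \<noteq> 0 \<longrightarrow> u \<bullet> (X *v u) > 0)"

lemma sym_form:
  fixes X :: "real^'n^'n"
  assumes "transpose X = X"
  shows "u \<bullet> (X *v v) = v \<bullet> (X *v u)"
proof -
  have "u \<bullet> (X *v v) = (u v* X) \<bullet> v" by (simp add: dot_lmul_matrix)
  also have "\<dots> = (transpose X *v u) \<bullet> v" by simp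
  also have "\<dots> = v \<bullet> (X *v u)" using assms by (simp add: inner_commute)
  finally show ?thesis .
qed

lemma form_expand:
  fixes X :: "real^'n^'n"
  assumes "transpose X = X"
  shows "(v + e *\<^sub>R w) \<bullet> (X *v (v + e *\<^sub>R w)) =
     v \<bullet> (X *v v) + 2 * e * (w \<bullet> (X *v v)) + e^2 * (w \<bullet> (X *v w))"
proof -
  have s: "v \<bullet> (X *v w) = w \<bullet> (X *v v)" using sym_form[OF assms] .
  show ?thesis
    by (simp add: matrix_vector_right_distrib matrix_vector_mult_scaleR inner_add_left
        inner_add_right s power2_eq_square algebra_simps)
qed

lemma lagrange_aux:
  fixes a c K :: real
  assumes "c > 0" and "\<And>e. 2 * e * a * c \<le> e^2 * K"
  shows "a = 0"
proof (rule ccontr)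
  assume a: "a \<noteq> 0"
  define s where "s = c / (\<bar>K\<bar> + 1)"
  have s0: "s > 0" using assms(1) by (simp add: s_def)
  have "2 * (s*a) * a * c \<le> (s*a)^2 * K" using assms(2) .
  hence "s * a^2 * (2 * c) \<le> s * a^2 * (s * K)" by (simp add: power2_eq_square algebra_simps)
  moreover have "s * a^2 > 0" using s0 a by simp
  ultimately have "2 * c \<le> s * K" using mult_le_cancel_left_pos by blast
  moreover have "s * K \<le> s * \<bar>K\<bar>" using s0 by (simp add: mult_left_mono)
  moreover have "s * \<bar>K\<bar> < c"
  proof -
    have "s * \<bar>K\<bar> = c * (\<bar>K\<bar> / (\<bar>K\<bar> + 1))" by (simp add: s_def)
    also have "\<dots> < c * 1" using assms(1) by (intro mult_strict_left_mono) auto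
    finally show ?thesis by simp
  qed
  ultimately show False using assms(1) by linarith
qed

lemma frac_cross: "(b::real) > 0 \<Longrightarrow> c > 0 \<Longrightarrow> a / b \<le> d / c \<Longrightarrow> a * c \<le> d * b"
  by (simp add: field_simps)

lemma sd_subspace:
  fixes X P :: "real^'n^'n"
  assumes X: "posdef X" and P: "transpose P = P"
  shows "subspace V \<Longrightarrow> dim V = n \<Longrightarrow> \<exists>B. B \<subseteq> V \<and> finite B \<and> card B = n \<and>
     (\<forall>b\<in>B. b \<bullet> (X *v b) = 1) \<and>
     (\<forall>b\<in>B. \<forall>c\<in>B. b \<noteq> c \<longrightarrow> b \<bullet> (X *v c) = 0 \<and> b \<bullet> (P *v c) = 0)"
proof (induction n arbitrary: V)
  case 0
  then show ?case by (intro exI[of _ "{}"]) auto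
next
  case (Suc n)
  have XS: "transpose X = X" and Xp: "\<And>u. u \<noteq> 0 \<Longrightarrow> u \<bullet> (X *v u) > 0"
    using X by (auto simp: posdef_def)
  have Xnn: "w \<bullet> (X *v w) \<ge> 0" for w
    using Xp[of w] by (cases "w = 0") auto
  from Suc.prems have "\<not> V \<subseteq> {0}" by (metis dim_eq_0 nat.simps(3))
  then obtain u0 where u0: "u0 \<in> V" "u0 \<noteq> 0" by blast
  define S where "S = V \<inter> sphere 0 1"
  define R where "R = (\<lambda>u::real^'n. (u \<bullet> (P *v u)) / (u \<bullet> (X *v u)))"
  have cS: "compact S" unfolding S_def
    by (rule closed_Int_compact[OF closed_subspace[OF Suc.prems(1)] compact_sphere])
  have "(1 / norm u0) *\<^sub>R u0 \<in> S" using u0 Suc.prems(1)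
    by (simp add: S_def subspace_scale)
  hence neS: "S \<noteq> {}" by blast
  have contR: "continuous_on S R" unfolding R_def
  proof (intro continuous_on_divide continuous_on_inner continuous_on_id)
    show "continuous_on S ((*v) P)" "continuous_on S ((*v) X)"
      by (auto intro!: linear_continuous_on matrix_vector_mul_linear)
    show "\<forall>x\<in>S. x \<bullet> (X *v x) \<noteq> 0"
    proof
      fix x assume "x \<in> S" hence "x \<noteq> 0" by (auto simp: S_def)
      thus "x \<bullet> (X *v x) \<noteq> 0" using Xp by force
    qed
  qed
  obtain v where vS: "v \<in> S" and vmax: "\<And>y. y \<in> S \<Longrightarrow> R y \<le> R v"
    using continuous_attains_sup[OF cS neS contR] by blast
  have vV: "v \<in> V" and v0: "v \<noteq> 0" using vS by (auto simp: S_def)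
  have Rscale: "R (c *\<^sub>R u) = R u" if "c \<noteq> 0" for c u
    using that by (simp add: R_def matrix_vector_mult_scaleR)
  have Rmax: "R u \<le> R v" if "u \<in> V" "u \<noteq> 0" for u
  proof -
    have "(1 / norm u) *\<^sub>R u \<in> S" using that Suc.prems(1)
      by (simp add: S_def subspace_scale)
    hence "R ((1 / norm u) *\<^sub>R u) \<le> R v" by (rule vmax)
    thus ?thesis using that Rscale[of "1 / norm u" u] by simp
  qed
  define c where "c = v \<bullet> (X *v v)"
  have c0: "c > 0" using Xp[OF v0] by (simp add: c_def)
  have lag: "w \<bullet> (P *v v) = 0" if wV: "w \<in> V" and wX: "w \<bullet> (X *v v) = 0" for w
  proof (rule lagrange_aux[OF c0])
    fix e :: real
    let ?u = "v + e *\<^sub>R w"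
    have uX: "?u \<bullet> (X *v ?u) = c + e^2 * (w \<bullet> (X *v w))"
      using form_expand[OF XS, of v e w] wX by (simp add: c_def)
    have uXp: "?u \<bullet> (X *v ?u) > 0" using uX c0 Xnn[of w] by (simp add: add_pos_nonneg)
    hence "?u \<noteq> 0" by auto
    moreover have "?u \<in> V" using wV vV Suc.prems(1) by (simp add: subspace_add subspace_scale)
    ultimately have "R ?u \<le> R v" using Rmax by blast
    hence "(?u \<bullet> (P *v ?u)) * c \<le> (v \<bullet> (P *v v)) * (?u \<bullet> (X *v ?u))"
      using frac_cross[OF uXp c0] by (simp add: R_def c_def)
    hence "(v \<bullet> (P *v v) + 2 * e * (w \<bullet> (P *v v)) + e^2 * (w \<bullet> (P *v w))) * c
       \<le> (v \<bullet> (P *v v)) * (c + e^2 * (w \<bullet> (X *v w)))"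
      unfolding form_expand[OF P] uX .
    thus "2 * e * (w \<bullet> (P *v v)) * c \<le> e^2 * ((v \<bullet> (P *v v)) * (w \<bullet> (X *v w)) - (w \<bullet> (P *v w)) * c)"
      by (simp add: algebra_simps)
  qed
  define v1 where "v1 = (1 / sqrt c) *\<^sub>R v"
  have v1V: "v1 \<in> V" using vV Suc.prems(1) by (simp add: v1_def subspace_scale)
  have v1X: "v1 \<bullet> (X *v v1) = 1"
  proof -
    have "v1 \<bullet> (X *v v1) = (1 / sqrt c) * (1 / sqrt c) * c"
      by (simp add: v1_def matrix_vector_mult_scaleR c_def)
    also have "\<dots> = 1" using c0 by (simp add: real_sqrt_mult_self)
    finally show ?thesis .
  qed
  define V' where "V' = {w \<in> V. w \<bullet> (X *v v1) = 0}"
  have sV': "subspace V'" using Suc.prems(1)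
    by (auto simp: V'_def subspace_def inner_add_left)
  have v1nV': "v1 \<notin> V'" using v1X by (simp add: V'_def)
  have spanV: "span (insert v1 V') = V"
  proof
    show "span (insert v1 V') \<subseteq> V"
      using Suc.prems(1) v1V by (intro span_minimal) (auto simp: V'_def)
    show "V \<subseteq> span (insert v1 V')"
    proof
      fix u assume uV: "u \<in> V"
      define a where "a = u \<bullet> (X *v v1)"
      have "u - a *\<^sub>R v1 \<in> V'" using uV v1V Suc.prems(1) v1X
        by (simp add: V'_def subspace_diff subspace_scale inner_diff_left a_def)
      hence "u - a *\<^sub>R v1 \<in> span (insert v1 V')" by (simp add: span_base)
      moreover have "a *\<^sub>R v1 \<in> span (insert v1 V')" by (simp add: span_base span_scale)
      ultimately have "(u - a *\<^sub>R v1) + a *\<^sub>R v1 \<in> span (insert v1 V')" by (rule span_add)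
      thus "u \<in> span (insert v1 V')" by simp
    qed
  qed
  have "dim V = dim (insert v1 V')" using spanV dim_span by metis
  also have "\<dots> = dim V' + 1"
  proof -
    have "span V' = V'" using sV' span_eq_iff by blast
    hence "v1 \<notin> span V'" using v1nV' by metis
    thus ?thesis by (simp add: dim_insert)
  qed
  finally have "dim V' = n" using Suc.prems(2) by simp
  then obtain B' where B': "B' \<subseteq> V'" "finite B'" "card B' = n"
     "\<forall>b\<in>B'. b \<bullet> (X *v b) = 1"
     "\<forall>b\<in>B'. \<forall>c\<in>B'. b \<noteq> c \<longrightarrow> b \<bullet> (X *v c) = 0 \<and> b \<bullet> (P *v c) = 0"
    using Suc.IH[OF sV'] by blast
  have v1nB': "v1 \<notin> B'" using B'(1) v1nV' by blast
  have orth: "b \<bullet> (X *v v1) = 0 \<and> b \<bullet> (P *v v1) = 0" if "b \<in> B'" for b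
  proof -
    have bV: "b \<in> V" and bX: "b \<bullet> (X *v v1) = 0" using that B'(1) by (auto simp: V'_def)
    have "b \<bullet> (X *v v) = 0" using bX c0
      by (simp add: v1_def matrix_vector_mult_scaleR)
    hence "b \<bullet> (P *v v) = 0" using lag bV by blast
    hence "b \<bullet> (P *v v1) = 0" by (simp add: v1_def matrix_vector_mult_scaleR)
    thus ?thesis using bX by simp
  qed
  show ?case
  proof (intro exI[of _ "insert v1 B'"] conjI)
    show "insert v1 B' \<subseteq> V" using v1V B'(1) by (auto simp: V'_def)
    show "finite (insert v1 B')" using B'(2) by simp
    show "card (insert v1 B') = Suc n" using B'(2,3) v1nB' by simp
    show "\<forall>b\<in>insert v1 B'. b \<bullet> (X *v b) = 1" using B'(4) v1X by simp
    show "\<forall>b\<in>insert v1 B'. \<forall>c\<in>insert v1 B'. b \<noteq> c \<longrightarrow> b \<bullet> (X *v c) = 0 \<and> b \<bullet> (P *v c) = 0"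
    proof (intro ballI impI)
      fix b d assume b: "b \<in> insert v1 B'" and d: "d \<in> insert v1 B'" and bd: "b \<noteq> d"
      show "b \<bullet> (X *v d) = 0 \<and> b \<bullet> (P *v d) = 0"
      proof (cases "b = v1")
        case True
        hence "d \<in> B'" using d bd by auto
        thus ?thesis using True orth[of d] sym_form[OF XS, of v1 d] sym_form[OF P, of v1 d] by simp
      next
        case False
        hence bB: "b \<in> B'" using b by auto
        show ?thesis
        proof (cases "d = v1")
          case True thus ?thesis using orth[OF bB] by simp
        next
          case False thus ?thesis using d bB bd B'(5) by auto
        qed
      qed
    qed
  qed
qed


lemma minv_props:
  fixes A :: "real^'n^'n"
  assumes "invertible A"
  shows "A ** matrix_inv A = mat 1" "matrix_inv A ** A = mat 1"
proof -
  have "\<exists>A'. A ** A' = mat 1 \<and> A' ** A = mat 1" using assms by (simp add: invertible_def)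
  hence "A ** matrix_inv A = mat 1 \<and> matrix_inv A ** A = mat 1"
    unfolding matrix_inv_def by (rule someI_ex)
  thus "A ** matrix_inv A = mat 1" "matrix_inv A ** A = mat 1" by auto
qed

lemma minv_eq:
  fixes A B :: "real^'n^'n"
  assumes "A ** B = mat 1"
  shows "matrix_inv A = B"
proof -
  have BA: "B ** A = mat 1" using assms matrix_left_right_inverse by blast
  hence inv: "invertible A" using assms by (auto simp: invertible_def)
  have "matrix_inv A = matrix_inv A ** (A ** B)" by (simp add: assms)
  also have "\<dots> = (matrix_inv A ** A) ** B" by (simp add: matrix_mul_assoc)
  also have "\<dots> = B" using minv_props[OF inv] by simp
  finally show ?thesis .
qed

lemma entry_form:
  fixes F :: "real^'m^'n" and Y :: "real^'n^'n"
  shows "(transpose F ** Y ** F) $ i $ k = (F *v axis i 1) \<bullet> (Y *v (F *v axis k 1))"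
proof -
  have c: "(F *v axis i 1) = (\<chi> m. F $ m $ i)" for i
    by (simp add: matrix_vector_mult_def axis_def vec_eq_iff if_distrib cong: if_cong)
  have "(transpose F ** Y ** F) $ i $ k = (\<Sum>l\<in>UNIV. \<Sum>m\<in>UNIV. F$m$i * Y$m$l * F$l$k)"
    by (simp add: matrix_matrix_mult_def transpose_def sum_distrib_right)
  also have "\<dots> = (\<Sum>m\<in>UNIV. \<Sum>l\<in>UNIV. F$m$i * Y$m$l * F$l$k)"
    by (rule sum.swap)
  also have "\<dots> = (\<chi> m. F $ m $ i) \<bullet> (Y *v (\<chi> m. F $ m $ k))"
    by (simp add: matrix_vector_mult_def inner_vec_def sum_distrib_left mult_ac)
  finally show ?thesis unfolding c .
qed

lemma sd_matrix:
  fixes X P :: "real^'n^'n"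
  assumes X: "posdef X" and P: "transpose P = P"
  shows "\<exists>F::real^'n^'n. transpose F ** X ** F = mat 1 \<and>
           (\<forall>i k. i \<noteq> k \<longrightarrow> (transpose F ** P ** F) $ i $ k = 0)"
proof -
  have "dim (UNIV :: (real^'n) set) = CARD('n)" by simp
  then obtain B where B: "finite B" "card B = CARD('n)"
     "\<forall>b\<in>B. b \<bullet> (X *v b) = 1"
     "\<forall>b\<in>B. \<forall>c\<in>B. b \<noteq> c \<longrightarrow> b \<bullet> (X *v c) = 0 \<and> b \<bullet> (P *v c) = 0"
    using sd_subspace[OF X P subspace_UNIV] by blast
  obtain g where g: "bij_betw g (UNIV::'n set) B"
    using finite_same_card_bij[of "UNIV::'n set" B] B(1,2) by auto
  define F :: "real^'n^'n" where "F = (\<chi> i k. g k $ i)"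
  have Fc: "F *v axis k 1 = g k" for k
    by (simp add: F_def matrix_vector_mult_def axis_def vec_eq_iff if_distrib cong: if_cong)
  have gB: "g k \<in> B" for k using g by (auto simp: bij_betw_def)
  have ginj: "g i \<noteq> g k" if "i \<noteq> k" for i k using g that by (auto simp: bij_betw_def inj_on_def)
  show ?thesis
  proof (intro exI[of _ F] conjI allI impI)
    show "transpose F ** X ** F = mat 1"
      unfolding vec_eq_iff entry_form Fc
      using B(3,4) gB ginj by (auto simp: mat_def)
    show "(transpose F ** P ** F) $ i $ k = 0" if "i \<noteq> k" for i k
      unfolding entry_form Fc using B(4) gB ginj[OF that] by auto
  qed
qed

lemma det_diag_prod:
  fixes X P :: "real^'n^'n"
  assumes X: "posdef X" and P: "transpose P = P"
  shows "\<exists>F::real^'n^'n. matrix_inv X = F ** transpose F \<and> transpose F ** X ** F = mat 1 \<and>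
     det P = det X * (\<Prod>k\<in>UNIV. (F *v axis k 1) \<bullet> (P *v (F *v axis k 1)))"
proof -
  obtain F :: "real^'n^'n" where F1: "transpose F ** X ** F = mat 1" and
     F2: "\<And>i k. i \<noteq> k \<Longrightarrow> (transpose F ** P ** F) $ i $ k = 0"
    using sd_matrix[OF X P] by metis
  have "(transpose F) ** (X ** F) = mat 1" using F1 by (simp add: matrix_mul_assoc)
  hence "(X ** F) ** transpose F = mat 1" using matrix_left_right_inverse by blast
  hence "X ** (F ** transpose F) = mat 1" by (simp add: matrix_mul_assoc)
  hence inv: "matrix_inv X = F ** transpose F" by (rule minv_eq)
  have d1: "det F * det X * det F = 1"
    using arg_cong[OF F1, of det] by (simp add: det_mul)
  have d2: "det F * det P * det F = (\<Prod>k\<in>UNIV. (transpose F ** P ** F) $ k $ k)"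
    using det_diagonal[of "transpose F ** P ** F", OF F2] by (simp add: det_mul)
  have "det P = det P * (det F * det X * det F)" using d1 by simp
  also have "\<dots> = det X * (det F * det P * det F)" by (simp add: mult_ac)
  finally have "det P = det X * (\<Prod>k\<in>UNIV. (transpose F ** P ** F) $ k $ k)" using d2 by simp
  thus ?thesis using inv F1 unfolding entry_form by blast
qed

lemma posdef_det_pos:
  fixes P :: "real^'n^'n"
  assumes P: "posdef P"
  shows "det P > 0"
proof -
  have I: "posdef (mat 1 :: real^'n^'n)"
    by (simp add: posdef_def)
  obtain F :: "real^'n^'n" where F: "matrix_inv (mat 1) = F ** transpose F"
     "transpose F ** mat 1 ** F = mat 1" "det P = det (mat 1 :: real^'n^'n) * (\<Prod>k\<in>UNIV. (F *v axis k 1) \<bullet> (P *v (F *v axis k 1)))"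
    using det_diag_prod[OF I] P by (auto simp: posdef_def)
  have "matrix_inv (mat 1 :: real^'n^'n) = mat 1" by (rule minv_eq) simp
  hence FF: "F ** transpose F = mat 1" using F(1) by simp
  hence "transpose F ** F = mat 1" using matrix_left_right_inverse by blast
  have nz: "F *v axis k 1 \<noteq> 0" for k
  proof
    assume "F *v axis k 1 = 0"
    hence "transpose F *v (F *v axis k 1) = 0" by simp
    hence "axis k 1 = (0::real^'n)"
      using \<open>transpose F ** F = mat 1\<close> by (simp add: matrix_vector_mul_assoc)
    thus False by (simp add: axis_eq_0_iff)
  qed
  have "(\<Prod>k\<in>UNIV. (F *v axis k 1) \<bullet> (P *v (F *v axis k 1))) > 0"
    using P nz by (intro prod_pos) (auto simp: posdef_def)
  thus ?thesis using F(3) by simp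
qed

lemma transpose_add: "transpose (X + Y) = transpose X + transpose (Y::real^'n^'m)"
  by (simp add: transpose_def vec_eq_iff)

lemma ifz: "(if P then a else (0::real)) * b = (if P then a * b else 0)" by simp

lemma diag_mult_vec: "diag_mat v *v x = (\<chi> i. v $ i * x $ i)"
  by (simp add: diag_mat_def matrix_vector_mult_def vec_eq_iff ifz)

lemma diag_transpose: "transpose (diag_mat v) = diag_mat v"
  by (simp add: diag_mat_def transpose_def vec_eq_iff)

lemma diag_mult: "diag_mat u ** diag_mat v = diag_mat (\<chi> i. u $ i * v $ i)"
  by (auto simp add: diag_mat_def matrix_matrix_mult_def vec_eq_iff ifz)

lemma diag_inner: "(diag_mat v *v x) \<bullet> y = x \<bullet> (diag_mat v *v y)"
  by (simp add: diag_mult_vec inner_vec_def mult_ac)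

lemma form_transpose: "u \<bullet> (transpose A *v v) = (A *v u) \<bullet> (v::real^'n)"
  by (metis dot_lmul_matrix inner_commute transpose_matrix_vector)

lemma posdef_invertible:
  fixes X :: "real^'n^'n"
  shows "posdef X \<Longrightarrow> invertible X"
  using posdef_det_pos invertible_det_nz by force

lemma minv_transpose:
  fixes X :: "real^'n^'n"
  assumes "invertible X"
  shows "matrix_inv (transpose X) = transpose (matrix_inv X)"
proof (rule minv_eq)
  have "transpose X ** transpose (matrix_inv X) = transpose (matrix_inv X ** X)"
    by (simp add: matrix_transpose_mul)
  thus "transpose X ** transpose (matrix_inv X) = mat 1" using minv_props[OF assms] by simp
qed

lemma minv_vec:
  fixes X :: "real^'n^'n"
  assumes "invertible X"
  shows "X *v (matrix_inv X *v z) = z" "matrix_inv X *v (X *v z) = z"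
  using minv_props[OF assms] by (simp_all add: matrix_vector_mul_assoc)

lemma posdef_inv:
  fixes X :: "real^'n^'n"
  assumes X: "posdef X"
  shows "posdef (matrix_inv X)"
proof -
  have inv: "invertible X" using posdef_invertible[OF X] .
  have sym: "transpose X = X" using X by (simp add: posdef_def)
  show ?thesis unfolding posdef_def
  proof (intro conjI allI impI)
    show "transpose (matrix_inv X) = matrix_inv X"
      using minv_transpose[OF inv] sym by simp
    fix z :: "real^'n" assume z: "z \<noteq> 0"
    define y where "y = matrix_inv X *v z"
    have Xy: "X *v y = z" using minv_vec[OF inv] by (simp add: y_def)
    have "y \<noteq> 0" using z Xy by auto
    hence "y \<bullet> (X *v y) > 0" using X by (simp add: posdef_def)
    moreover have "z \<bullet> (matrix_inv X *v z) = y \<bullet> (X *v y)"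
      using Xy y_def by (simp add: inner_commute)
    ultimately show "z \<bullet> (matrix_inv X *v z) > 0" by simp
  qed
qed

definition Bm :: "real \<Rightarrow> real^'j^'j \<Rightarrow> real^'j \<Rightarrow> real^'j^'j" where
  "Bm s2 Sig xi = s2 *\<^sub>R mat 1 + M0_sqrt xi ** Sig ** M0_sqrt xi"

definition Wm :: "real \<Rightarrow> real^'j^'j \<Rightarrow> real^'j \<Rightarrow> real^'j^'j" where
  "Wm s2 Sig xi = M0_sqrt xi ** matrix_inv (Bm s2 Sig xi) ** M0_sqrt xi"

definition Dinv :: "real^'j \<Rightarrow> real^'j^'j" where
  "Dinv xi = diag_mat (\<chi> i. 1 / sqrt (xi $ i))"

lemma matrix_add_rdistrib: "(A + B) ** C = A ** C + B ** (C::real^'p^'n)"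
  by (simp add: matrix_matrix_mult_def vec_eq_iff sum.distrib distrib_right)

lemma M_beta_W: "M_beta s2 Sig A xi = transpose A ** Wm s2 Sig xi ** A"
  by (simp add: M_beta_def Wm_def Bm_def matrix_mul_assoc)

lemma diag_one: "diag_mat (\<chi> i. 1) = mat 1"
  by (simp add: diag_mat_def mat_def vec_eq_iff)

lemma M0_sqrt_sq: "(\<forall>j. xi $ j \<ge> 0) \<Longrightarrow> M0_sqrt xi ** M0_sqrt xi = M0 xi"
  by (simp add: M0_sqrt_def M0_def diag_mult)

lemma Dinv_D: assumes "\<forall>j. xi $ j > 0" shows "Dinv xi ** M0_sqrt xi = mat 1"
proof -
  have "\<And>i. xi $ i \<noteq> 0" using assms by (metis less_irrefl)
  thus ?thesis by (simp add: M0_sqrt_def Dinv_def diag_mult diag_one[symmetric])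
qed

lemma D_Dinv: assumes "\<forall>j. xi $ j > 0" shows "M0_sqrt xi ** Dinv xi = mat 1"
proof -
  have "\<And>i. xi $ i \<noteq> 0" using assms by (metis less_irrefl)
  thus ?thesis by (simp add: M0_sqrt_def Dinv_def diag_mult diag_one[symmetric])
qed

lemma scal_id_vec: "(c *\<^sub>R mat 1) *v (u::real^'n) = c *\<^sub>R u"
  by (simp add: vec_eq_iff matrix_vector_mult_def mat_def if_distrib if_distribR cong: if_cong)

lemma D_sym: "transpose (M0_sqrt xi) = M0_sqrt xi"
  by (simp add: M0_sqrt_def diag_transpose)

lemma D_inner: "(M0_sqrt xi *v x) \<bullet> y = x \<bullet> (M0_sqrt xi *v y)"
  by (simp add: M0_sqrt_def diag_inner)

context
  fixes s2 :: real and Sig :: "real^'j^'j"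
  assumes s2: "s2 > 0" and sym: "transpose Sig = Sig" and psd: "\<forall>x. x \<bullet> (Sig *v x) \<ge> 0"
begin

lemma Bm_form: "u \<bullet> (Bm s2 Sig xi *v u) = s2 * (u \<bullet> u) + (M0_sqrt xi *v u) \<bullet> (Sig *v (M0_sqrt xi *v u))"
  by (simp add: Bm_def matrix_vector_mult_add_rdistrib scal_id_vec
      matrix_vector_mul_assoc[symmetric] D_inner[symmetric] inner_add_right)

lemma Bm_posdef: "posdef (Bm s2 Sig xi)"
  unfolding posdef_def
proof (intro conjI allI impI)
  show "transpose (Bm s2 Sig xi) = Bm s2 Sig xi"
    by (simp add: Bm_def transpose_add transpose_scalar matrix_transpose_mul D_sym sym matrix_mul_assoc)
  fix u :: "real^'j" assume "u \<noteq> 0"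
  hence "u \<bullet> u > 0" by simp
  thus "u \<bullet> (Bm s2 Sig xi *v u) > 0"
    unfolding Bm_form using s2 psd by (simp add: add_pos_nonneg)
qed

lemma Bm_inv: "invertible (Bm s2 Sig xi)"
  by (rule posdef_invertible[OF Bm_posdef])

lemma W_form:
  fixes x xi :: "real^'j"
  defines "z \<equiv> matrix_inv (Bm s2 Sig xi) *v (M0_sqrt xi *v x)"
  shows "x \<bullet> (Wm s2 Sig xi *v x) = s2 * (z \<bullet> z) + (M0_sqrt xi *v z) \<bullet> (Sig *v (M0_sqrt xi *v z))"
    and "Bm s2 Sig xi *v z = M0_sqrt xi *v x"
proof -
  show Bz: "Bm s2 Sig xi *v z = M0_sqrt xi *v x"
    unfolding z_def by (rule minv_vec(1)[OF Bm_inv])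
  have "x \<bullet> (Wm s2 Sig xi *v x) = (M0_sqrt xi *v x) \<bullet> z"
    by (simp add: Wm_def z_def matrix_vector_mul_assoc[symmetric] D_inner)
  also have "\<dots> = z \<bullet> (Bm s2 Sig xi *v z)" by (simp add: Bz inner_commute)
  finally show "x \<bullet> (Wm s2 Sig xi *v x) = s2 * (z \<bullet> z) + (M0_sqrt xi *v z) \<bullet> (Sig *v (M0_sqrt xi *v z))"
    by (simp add: Bm_form)
qed


lemma C_explicit:
  assumes pos: "\<forall>j. xi $ j > 0"
  shows "(s2 *\<^sub>R mat 1 + Sig ** M0 xi) ** (Dinv xi ** matrix_inv (Bm s2 Sig xi) ** M0_sqrt xi) = mat 1"
proof -
  let ?D = "M0_sqrt xi" and ?Di = "Dinv xi" and ?Bi = "matrix_inv (Bm s2 Sig xi)"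
  have M: "M0 xi = ?D ** ?D" using pos by (intro M0_sqrt_sq[symmetric]) (simp add: less_imp_le)
  have e1: "(s2 *\<^sub>R mat 1 + Sig ** M0 xi) ** ?Di = s2 *\<^sub>R ?Di + Sig ** ?D"
  proof -
    have "(s2 *\<^sub>R mat 1 + Sig ** M0 xi) ** ?Di = (s2 *\<^sub>R mat 1) ** ?Di + Sig ** (?D ** (?D ** ?Di))"
      by (simp add: M matrix_add_rdistrib matrix_mul_assoc)
    also have "\<dots> = s2 *\<^sub>R ?Di + Sig ** ?D"
      by (simp add: D_Dinv[OF pos] scalar_matrix_assoc[symmetric])
    finally show ?thesis .
  qed
  have e2: "?Di ** Bm s2 Sig xi = s2 *\<^sub>R ?Di + Sig ** ?D"
  proof -
    have "?Di ** Bm s2 Sig xi = ?Di ** (s2 *\<^sub>R mat 1) + (?Di ** ?D) ** Sig ** ?D"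
      by (simp add: Bm_def matrix_add_ldistrib matrix_mul_assoc)
    also have "\<dots> = s2 *\<^sub>R ?Di + Sig ** ?D"
      by (simp add: Dinv_D[OF pos] matrix_scalar_ac)
    finally show ?thesis .
  qed
  have "(s2 *\<^sub>R mat 1 + Sig ** M0 xi) ** (?Di ** ?Bi ** ?D) = ((s2 *\<^sub>R mat 1 + Sig ** M0 xi) ** ?Di) ** ?Bi ** ?D"
    by (simp add: matrix_mul_assoc)
  also have "\<dots> = ?Di ** (Bm s2 Sig xi ** ?Bi) ** ?D" by (simp add: e1 e2 matrix_mul_assoc)
  also have "\<dots> = mat 1" using minv_props(1)[OF Bm_inv] Dinv_D[OF pos] by simp
  finally show ?thesis .
qed

lemma C_eq:
  assumes pos: "\<forall>j. xi $ j > 0"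
  shows "matrix_inv (s2 *\<^sub>R mat 1 + Sig ** M0 xi) = Dinv xi ** matrix_inv (Bm s2 Sig xi) ** M0_sqrt xi"
  by (rule minv_eq[OF C_explicit[OF pos]])

lemma C_inv:
  assumes pos: "\<forall>j. xi $ j > 0"
  shows "invertible (s2 *\<^sub>R mat 1 + Sig ** M0 xi)"
  using C_explicit[OF pos] matrix_left_right_inverse invertible_def by blast

lemma U_ineq:
  fixes x xi xi0 :: "real^'j"
  assumes pos: "\<forall>j. xi0 $ j > 0" and nn: "\<forall>j. xi $ j \<ge> 0"
  defines "y \<equiv> matrix_inv (s2 *\<^sub>R mat 1 + Sig ** M0 xi0) *v x"
  shows "x \<bullet> (Wm s2 Sig xi *v x) \<le> x \<bullet> (Wm s2 Sig xi0 *v x)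
          + s2 * (\<Sum>j\<in>UNIV. (xi $ j - xi0 $ j) * (y $ j)^2)"
proof -
  let ?DA = "M0_sqrt xi0" and ?D = "M0_sqrt xi" and ?DiA = "Dinv xi0"
  let ?BiA = "matrix_inv (Bm s2 Sig xi0)"
  define m where "m = M0 xi0 *v y"
  have m_eq: "m = (\<chi> j. xi0 $ j * y $ j)" by (simp add: m_def M0_def diag_mult_vec)
  have x_eq: "x = s2 *\<^sub>R y + Sig *v m"
  proof -
    have "x = (s2 *\<^sub>R mat 1 + Sig ** M0 xi0) *v y"
      unfolding y_def by (rule minv_vec(1)[OF C_inv[OF pos], symmetric])
    thus ?thesis by (simp add: m_def matrix_vector_mult_add_rdistrib scal_id_vec matrix_vector_mul_assoc)
  qed
  have W0x: "Wm s2 Sig xi0 *v x = m"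
  proof -
    have "?BiA *v (?DA *v x) = ?DA *v y"
    proof -
      have "?DA *v y = ?DA *v (?DiA *v (?BiA *v (?DA *v x)))"
        by (simp add: y_def C_eq[OF pos] matrix_vector_mul_assoc matrix_mul_assoc)
      also have "\<dots> = ?BiA *v (?DA *v x)"
        by (simp add: matrix_vector_mul_assoc D_Dinv[OF pos] matrix_mul_assoc)
      finally show ?thesis by simp
    qed
    hence "Wm s2 Sig xi0 *v x = ?DA *v (?DA *v y)"
      by (simp add: Wm_def matrix_vector_mul_assoc[symmetric])
    also have "\<dots> = m" using M0_sqrt_sq[of xi0] pos
      by (simp add: m_def matrix_vector_mul_assoc less_imp_le)
    finally show ?thesis .
  qed
  have ym: "y \<bullet> m = (\<Sum>j\<in>UNIV. xi0 $ j * (y $ j)^2)"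
    by (simp add: m_eq inner_vec_def power2_eq_square mult_ac)
  have xW0x: "x \<bullet> (Wm s2 Sig xi0 *v x) = s2 * (\<Sum>j\<in>UNIV. xi0 $ j * (y $ j)^2) + m \<bullet> (Sig *v m)"
    unfolding W0x using ym by (simp add: x_eq inner_add_left inner_add_right inner_commute)
  define z where "z = matrix_inv (Bm s2 Sig xi) *v (?D *v x)"
  define w where "w = ?D *v z"
  have xWx: "x \<bullet> (Wm s2 Sig xi *v x) = s2 * (z \<bullet> z) + w \<bullet> (Sig *v w)"
    using W_form(1)[of x xi] by (simp add: z_def w_def)
  have Bz: "Bm s2 Sig xi *v z = ?D *v x" using W_form(2)[of xi x] by (simp add: z_def)
  have key: "s2 * (z \<bullet> z) + w \<bullet> (Sig *v w) = s2 * (w \<bullet> y) + w \<bullet> (Sig *v m)"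
  proof -
    have "s2 * (z \<bullet> z) + w \<bullet> (Sig *v w) = z \<bullet> (Bm s2 Sig xi *v z)"
      by (simp add: Bm_form w_def)
    also have "\<dots> = w \<bullet> x" by (simp add: Bz w_def D_inner)
    also have "\<dots> = s2 * (w \<bullet> y) + w \<bullet> (Sig *v m)" by (simp add: x_eq inner_add_right)
    finally show ?thesis .
  qed
  have p1: "0 \<le> (m - w) \<bullet> (Sig *v (m - w))" using psd by blast
  have p1': "(m - w) \<bullet> (Sig *v (m - w)) = m \<bullet> (Sig *v m) - 2 * (w \<bullet> (Sig *v m)) + w \<bullet> (Sig *v w)"
    using sym_form[OF sym, of w m]
    by (simp add: matrix_vector_mult_diff_distrib inner_diff_left inner_diff_right)
  have p2: "0 \<le> (\<Sum>j\<in>UNIV. (sqrt (xi $ j) * y $ j - z $ j)^2)" by (simp add: sum_nonneg)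
  have p2': "(\<Sum>j\<in>UNIV. (sqrt (xi $ j) * y $ j - z $ j)^2)
       = (\<Sum>j\<in>UNIV. xi $ j * (y $ j)^2) - 2 * (w \<bullet> y) + z \<bullet> z"
  proof -
    have "(\<Sum>j\<in>UNIV. (sqrt (xi $ j) * y $ j - z $ j)^2)
       = (\<Sum>j\<in>UNIV. xi $ j * (y $ j)^2 - 2 * (sqrt (xi $ j) * z $ j * y $ j) + z $ j * z $ j)"
      using nn by (intro sum.cong refl) (simp add: power2_diff power_mult_distrib mult_ac power2_eq_square[of "z $ _"])
    also have "\<dots> = (\<Sum>j\<in>UNIV. xi $ j * (y $ j)^2) - 2 * (w \<bullet> y) + z \<bullet> z"
      by (simp add: sum.distrib sum_subtractf sum_distrib_left w_def M0_sqrt_def diag_mult_vec inner_vec_def)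
    finally show ?thesis .
  qed
  have sumsplit: "(\<Sum>j\<in>UNIV. xi $ j * (y $ j)^2) = (\<Sum>j\<in>UNIV. xi0 $ j * (y $ j)^2) + (\<Sum>j\<in>UNIV. (xi $ j - xi0 $ j) * (y $ j)^2)"
    by (simp add: sum.distrib[symmetric] algebra_simps)
  have "s2 * (2 * (w \<bullet> y) - z \<bullet> z) \<le> s2 * (\<Sum>j\<in>UNIV. xi $ j * (y $ j)^2)"
    using p2 p2' s2 by (intro mult_left_mono) auto
  thus ?thesis unfolding xWx xW0x using key p1 p1' sumsplit by (simp add: algebra_simps)
qed

lemma Bi_sym: "transpose (matrix_inv (Bm s2 Sig xi)) = matrix_inv (Bm s2 Sig xi)"
  using posdef_inv[OF Bm_posdef] by (simp add: posdef_def)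

lemma W_sym: "transpose (Wm s2 Sig xi) = Wm s2 Sig xi"
  by (simp add: Wm_def matrix_transpose_mul D_sym Bi_sym matrix_mul_assoc)

lemma Mb_form: "u \<bullet> (M_beta s2 Sig A xi *v u) = (A *v u) \<bullet> (Wm s2 Sig xi *v (A *v u))"
  by (simp add: M_beta_W matrix_vector_mul_assoc[symmetric] form_transpose del: transpose_matrix_vector)

lemma Mb_posdef:
  fixes A :: "real^'p^'j"
  assumes rk: "rank A = CARD('p)" and nn: "\<forall>j. xi $ j \<ge> 0"
    and rows: "\<And>j k. xi $ j = 0 \<Longrightarrow> A $ j $ k = 0"
  shows "posdef (M_beta s2 Sig A xi)"
  unfolding posdef_def
proof (intro conjI allI impI)
  show "transpose (M_beta s2 Sig A xi) = M_beta s2 Sig A xi"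
    by (simp add: M_beta_W matrix_transpose_mul W_sym matrix_mul_assoc)
  fix u :: "real^'p" assume u: "u \<noteq> 0"
  have inj: "inj ((*v) A)" using rk full_rank_injective by blast
  hence Au: "A *v u \<noteq> 0" using u by (metis inj_eq matrix_vector_mult_0_right)
  then obtain j where j: "(A *v u) $ j \<noteq> 0" by (metis vec_eq_iff zero_index)
  have "xi $ j \<noteq> 0"
  proof
    assume "xi $ j = 0"
    hence "(A *v u) $ j = 0" using rows by (simp add: matrix_vector_mult_def)
    thus False using j by simp
  qed
  hence "xi $ j > 0" using nn by (simp add: less_le)
  hence "(M0_sqrt xi *v (A *v u)) $ j \<noteq> 0" using j
    by (simp add: M0_sqrt_def diag_mult_vec)
  hence DAu: "M0_sqrt xi *v (A *v u) \<noteq> 0" by auto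
  have "u \<bullet> (M_beta s2 Sig A xi *v u) =
     (M0_sqrt xi *v (A *v u)) \<bullet> (matrix_inv (Bm s2 Sig xi) *v (M0_sqrt xi *v (A *v u)))"
    by (simp add: Mb_form Wm_def matrix_vector_mul_assoc[symmetric] D_inner)
  also have "\<dots> > 0" using posdef_inv[OF Bm_posdef] DAu by (simp add: posdef_def)
  finally show "u \<bullet> (M_beta s2 Sig A xi *v u) > 0" .
qed

end

lemma estimable_rows:
  fixes A :: "real^'p^'j" and xi :: "real^'j"
  assumes "estimable A xi" and "xi $ j = 0"
  shows "A $ j $ k = 0"
proof -
  define T where "T = {v::real^'j. \<forall>i. xi $ i = 0 \<longrightarrow> v $ i = 0}"
  have sT: "subspace T" by (auto simp: T_def subspace_def)
  have "columns (M0 xi) \<subseteq> T"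
    by (auto simp: T_def columns_def column_def M0_def diag_mat_def)
  hence "span (columns (M0 xi)) \<subseteq> T" using sT by (rule span_minimal)
  moreover have "column k A \<in> columns A" by (auto simp: columns_def)
  ultimately have "column k A \<in> T" using assms(1) by (auto simp: estimable_def)
  thus ?thesis using assms(2) by (simp add: T_def column_def)
qed

lemma estimable_full:
  fixes A :: "real^'p^'j"
  assumes rk: "rank A = CARD('p)" and pos: "\<forall>j. xi $ j > 0"
  shows "estimable A xi"
  unfolding estimable_def
proof (intro conjI rk subsetI)
  fix v assume "v \<in> columns A"
  have ax: "axis i 1 \<in> span (columns (M0 xi))" for i
  proof -
    have c: "column i (M0 xi) \<in> columns (M0 xi)" by (auto simp: columns_def)
    have "axis i 1 = (1 / xi $ i) *\<^sub>R column i (M0 xi)"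
      using pos[rule_format, of i]
      by (auto simp: vec_eq_iff axis_def column_def M0_def diag_mat_def)
    thus ?thesis using c by (simp add: span_base span_scale)
  qed
  have "v = (\<Sum>i\<in>UNIV. v $ i *\<^sub>R axis i 1)"
    using basis_expansion[of v] by (simp add: scalar_mult_eq_scaleR)
  also have "\<dots> \<in> span (columns (M0 xi))"
    using ax by (intro span_sum span_scale) auto
  finally show "v \<in> span (columns (M0 xi))" .
qed


lemma axis_entry: "(K *v axis k 1) $ j = K $ j $ (k::'n) " for K :: "real^'n^'m"
  by (simp add: matrix_vector_mult_def axis_def if_distrib if_distribR cong: if_cong)

lemma sumsq_entry:
  fixes H :: "real^'n^'m" and F :: "real^'q^'n"
  shows "(\<Sum>k\<in>UNIV. ((H *v (F *v axis k 1)) $ j)^2) = (H ** F ** transpose F ** transpose H) $ j $ j"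
proof -
  let ?K = "H ** F"
  have "H ** F ** transpose F ** transpose H = ?K ** transpose ?K"
    by (simp add: matrix_transpose_mul matrix_mul_assoc)
  moreover have "(?K ** transpose ?K) $ j $ j = (\<Sum>k\<in>UNIV. ?K $ j $ k * ?K $ j $ k)"
    by (simp add: matrix_matrix_mult_def transpose_def)
  moreover have "(H *v (F *v axis k 1)) $ j = ?K $ j $ k" for k
    by (simp add: matrix_vector_mul_assoc axis_entry)
  ultimately show ?thesis by (simp add: power2_eq_square)
qed

lemma M0_sym: "transpose (M0 xi) = M0 xi"
  by (simp add: M0_def diag_transpose)

context
  fixes s2 :: real and Sig :: "real^'j^'j"
  assumes s2: "s2 > 0" and sym: "transpose Sig = Sig" and psd: "\<forall>x. x \<bullet> (Sig *v x) \<ge> 0"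
begin

lemma psi_eq:
  fixes A :: "real^'p^'j"
  assumes pos: "\<forall>j. xi $ j > 0"
  shows "psi s2 Sig A xi j =
    (matrix_inv (s2 *\<^sub>R mat 1 + Sig ** M0 xi) ** A ** matrix_inv (M_beta s2 Sig A xi)
      ** transpose (matrix_inv (s2 *\<^sub>R mat 1 + Sig ** M0 xi) ** A)) $ j $ j"
proof -
  have "transpose (s2 *\<^sub>R mat 1 + Sig ** M0 xi) = s2 *\<^sub>R mat 1 + M0 xi ** Sig"
    by (simp add: transpose_add transpose_scalar matrix_transpose_mul M0_sym sym)
  hence "matrix_inv (s2 *\<^sub>R mat 1 + M0 xi ** Sig) = transpose (matrix_inv (s2 *\<^sub>R mat 1 + Sig ** M0 xi))"
    using minv_transpose[OF C_inv[OF s2 sym psd pos]] by simp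
  thus ?thesis by (simp add: psi_def matrix_transpose_mul matrix_mul_assoc)
qed

lemma G_ineq:
  fixes A :: "real^'p^'j" and xi xi0 :: "real^'j"
  assumes rk: "rank A = CARD('p)" and pos: "\<forall>j. xi0 $ j > 0" and nn: "\<forall>j. xi $ j \<ge> 0"
    and est: "estimable A xi"
  shows "det (M_beta s2 Sig A xi) \<le> det (M_beta s2 Sig A xi0) *
           exp (s2 * (\<Sum>j\<in>UNIV. (xi $ j - xi0 $ j) * psi s2 Sig A xi0 j))"
proof -
  let ?X = "M_beta s2 Sig A xi0" and ?P = "M_beta s2 Sig A xi"
  let ?C = "matrix_inv (s2 *\<^sub>R mat 1 + Sig ** M0 xi0)"
  have X: "posdef ?X"
  proof (rule Mb_posdef[OF s2 sym psd rk])
    show "\<forall>j. xi0 $ j \<ge> 0" using pos less_imp_le by blast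
    fix j k assume "xi0 $ j = 0" thus "A $ j $ k = 0" using pos by (metis less_irrefl)
  qed
  have P: "posdef ?P"
    using Mb_posdef[OF s2 sym psd rk nn] estimable_rows[OF est] by blast
  obtain F :: "real^'p^'p" where F1: "matrix_inv ?X = F ** transpose F"
     and F2: "transpose F ** ?X ** F = mat 1"
     and F3: "det ?P = det ?X * (\<Prod>k\<in>UNIV. (F *v axis k 1) \<bullet> (?P *v (F *v axis k 1)))"
    using det_diag_prod[OF X] P by (auto simp: posdef_def)
  define f where "f k = F *v axis k 1" for k
  define mu where "mu k = f k \<bullet> (?P *v f k)" for k
  define q where "q k = s2 * (\<Sum>j\<in>UNIV. (xi $ j - xi0 $ j) * ((?C *v (A *v f k)) $ j)^2)" for k
  have fX: "f k \<bullet> (?X *v f k) = 1" for k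
    using arg_cong[OF F2, of "\<lambda>M. M $ k $ k"] by (simp add: entry_form f_def mat_def)
  have f0: "f k \<noteq> 0" for k using fX[of k] by auto
  have mu_pos: "mu k > 0" for k using P f0 by (simp add: posdef_def mu_def)
  have mu_le: "mu k \<le> 1 + q k" for k
  proof -
    have "mu k = (A *v f k) \<bullet> (Wm s2 Sig xi *v (A *v f k))" by (simp add: mu_def Mb_form[OF s2 sym psd])
    also have "\<dots> \<le> (A *v f k) \<bullet> (Wm s2 Sig xi0 *v (A *v f k)) + q k"
      unfolding q_def by (rule U_ineq[OF s2 sym psd pos nn])
    also have "(A *v f k) \<bullet> (Wm s2 Sig xi0 *v (A *v f k)) = 1"
      using fX[of k] by (simp add: Mb_form[OF s2 sym psd])
    finally show ?thesis .
  qed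
  have "(\<Prod>k\<in>UNIV. mu k) \<le> (\<Prod>k\<in>UNIV. exp (q k))"
  proof (rule prod_mono)
    fix k :: 'p
    have "mu k \<le> exp (mu k - 1)" using exp_ge_add_one_self[of "mu k - 1"] by simp
    also have "\<dots> \<le> exp (q k)" using mu_le[of k] by simp
    finally show "0 \<le> mu k \<and> mu k \<le> exp (q k)" using mu_pos[of k] by simp
  qed
  also have "\<dots> = exp (\<Sum>k\<in>UNIV. q k)" by (simp add: exp_sum)
  also have "(\<Sum>k\<in>UNIV. q k) = s2 * (\<Sum>j\<in>UNIV. (xi $ j - xi0 $ j) * psi s2 Sig A xi0 j)"
  proof -
    have "(\<Sum>k\<in>UNIV. q k) = s2 * (\<Sum>k\<in>UNIV. \<Sum>j\<in>UNIV. (xi $ j - xi0 $ j) * ((?C *v (A *v f k)) $ j)^2)"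
      by (simp add: q_def sum_distrib_left)
    also have "\<dots> = s2 * (\<Sum>j\<in>UNIV. \<Sum>k\<in>UNIV. (xi $ j - xi0 $ j) * ((?C *v (A *v f k)) $ j)^2)"
      by (subst sum.swap) (rule refl)
    also have "\<dots> = s2 * (\<Sum>j\<in>UNIV. (xi $ j - xi0 $ j) * (\<Sum>k\<in>UNIV. (((?C ** A) *v (F *v axis k 1)) $ j)^2))"
      by (simp add: sum_distrib_left f_def matrix_vector_mul_assoc matrix_mul_assoc)
    also have "\<dots> = s2 * (\<Sum>j\<in>UNIV. (xi $ j - xi0 $ j) * psi s2 Sig A xi0 j)"
    proof -
      have "(\<Sum>k\<in>UNIV. (((?C ** A) *v (F *v axis k 1)) $ j)^2) = psi s2 Sig A xi0 j" for j
      proof -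
        have "(\<Sum>k\<in>UNIV. (((?C ** A) *v (F *v axis k 1)) $ j)^2) = ((?C ** A) ** F ** transpose F ** transpose (?C ** A)) $ j $ j"
          by (rule sumsq_entry)
        also have "(?C ** A) ** F ** transpose F ** transpose (?C ** A) = ?C ** A ** matrix_inv ?X ** transpose (?C ** A)"
          unfolding F1 by (simp only: matrix_mul_assoc)
        finally show ?thesis using psi_eq[OF pos, of A j] by simp
      qed
      thus ?thesis by simp
    qed
    finally show ?thesis .
  qed
  finally have "(\<Prod>k\<in>UNIV. mu k) \<le> exp (s2 * (\<Sum>j\<in>UNIV. (xi $ j - xi0 $ j) * psi s2 Sig A xi0 j))" .
  moreover have "det ?X > 0" by (rule posdef_det_pos[OF X])
  ultimately show ?thesis using F3 by (simp add: mu_def f_def)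
qed

end

definition mlim :: "('a \<Rightarrow> real^'n^'m) \<Rightarrow> real^'n^'m \<Rightarrow> 'a filter \<Rightarrow> bool" where
  "mlim X X0 F \<longleftrightarrow> (\<forall>a b. ((\<lambda>t. X t $ a $ b) \<longlongrightarrow> X0 $ a $ b) F)"

lemma mlim_const: "mlim (\<lambda>t. X) X F"
  by (simp add: mlim_def)

lemma mlim_add: "mlim X X0 F \<Longrightarrow> mlim Y Y0 F \<Longrightarrow> mlim (\<lambda>t. X t + Y t) (X0 + Y0) F"
  by (auto simp: mlim_def intro!: tendsto_add)

lemma mlim_scaleR: "mlim X X0 F \<Longrightarrow> mlim (\<lambda>t. c *\<^sub>R X t) (c *\<^sub>R X0) F"
  by (auto simp: mlim_def intro!: tendsto_mult)

lemma mlim_mult: "mlim X X0 F \<Longrightarrow> mlim Y Y0 F \<Longrightarrow> mlim (\<lambda>t. X t ** Y t) (X0 ** Y0) F"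
  by (auto simp: mlim_def matrix_matrix_mult_def intro!: tendsto_sum tendsto_mult)

lemma mlim_transpose: "mlim X X0 F \<Longrightarrow> mlim (\<lambda>t. transpose (X t)) (transpose X0) F"
  by (auto simp: mlim_def transpose_def)

lemma mlim_diag: "(\<And>i. ((\<lambda>t. v t $ i) \<longlongrightarrow> v0 $ i) F) \<Longrightarrow> mlim (\<lambda>t. diag_mat (v t)) (diag_mat v0) F"
  by (auto simp: mlim_def diag_mat_def)

lemma det_tendsto: "mlim X X0 F \<Longrightarrow> ((\<lambda>t. det (X t)) \<longlongrightarrow> det X0) F"
  unfolding det_def mlim_def
  by (intro tendsto_sum tendsto_mult tendsto_const tendsto_prod) auto

lemma cramer_entry:
  fixes Y :: "real^'n^'n"
  assumes d: "det Y \<noteq> 0"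
  shows "matrix_inv Y $ a $ b = det (\<chi> r c. if c = a then axis b 1 $ r else Y $ r $ c) / det Y"
proof -
  have inv: "invertible Y" using d invertible_det_nz by blast
  have "Y *v (matrix_inv Y *v axis b 1) = axis b 1" by (rule minv_vec(1)[OF inv])
  hence "matrix_inv Y *v axis b 1 = (\<chi> k. det (\<chi> i j. if j = k then axis b 1 $ i else Y $ i $ j) / det Y)"
    using cramer[OF d] by blast
  hence "(matrix_inv Y *v axis b 1) $ a = det (\<chi> i j. if j = a then axis b 1 $ i else Y $ i $ j) / det Y"
    by simp
  thus ?thesis by (simp add: axis_entry)
qed

lemma mlim_inv:
  fixes X :: "'a \<Rightarrow> real^'n^'n"
  assumes X: "mlim X X0 F" and d: "det X0 \<noteq> 0"
  shows "mlim (\<lambda>t. matrix_inv (X t)) (matrix_inv X0) F"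
  unfolding mlim_def
proof (intro allI)
  fix a b
  have dt: "((\<lambda>t. det (X t)) \<longlongrightarrow> det X0) F" by (rule det_tendsto[OF X])
  have ev: "eventually (\<lambda>t. det (X t) \<noteq> 0) F" by (rule tendsto_imp_eventually_ne[OF dt d])
  let ?N = "\<lambda>Y::real^'n^'n. (\<chi> r c. if c = a then axis b 1 $ r else Y $ r $ c) :: real^'n^'n"
  have "mlim (\<lambda>t. ?N (X t)) (?N X0) F"
    using X by (auto simp: mlim_def)
  hence "((\<lambda>t. det (?N (X t)) / det (X t)) \<longlongrightarrow> det (?N X0) / det X0) F"
    by (intro tendsto_divide det_tendsto dt d)
  hence "((\<lambda>t. det (?N (X t)) / det (X t)) \<longlongrightarrow> matrix_inv X0 $ a $ b) F"
    by (simp add: cramer_entry[OF d])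
  moreover have "eventually (\<lambda>t. det (?N (X t)) / det (X t) = matrix_inv (X t) $ a $ b) F"
    using ev by eventually_elim (simp add: cramer_entry)
  ultimately show "((\<lambda>t. matrix_inv (X t) $ a $ b) \<longlongrightarrow> matrix_inv X0 $ a $ b) F"
    by (rule Lim_transform_eventually)
qed

lemma psi_tendsto:
  fixes s2 :: real and Sig :: "real^'j^'j" and A :: "real^'p^'j"
  assumes s2: "s2 > 0" and sym: "transpose Sig = Sig" and psd: "\<forall>x. x \<bullet> (Sig *v x) \<ge> 0"
    and rk: "rank A = CARD('p)" and pos: "\<forall>j. xs $ j > 0"
    and lim: "\<And>i. ((\<lambda>t. xi t $ i) \<longlongrightarrow> xs $ i) F"
  shows "((\<lambda>t. psi s2 Sig A (xi t) j) \<longlongrightarrow> psi s2 Sig A xs j) F"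
proof -
  have LD: "mlim (\<lambda>t. M0_sqrt (xi t)) (M0_sqrt xs) F"
    unfolding M0_sqrt_def by (rule mlim_diag) (auto intro!: tendsto_real_sqrt lim)
  have LM: "mlim (\<lambda>t. M0 (xi t)) (M0 xs) F"
    unfolding M0_def by (rule mlim_diag) (auto intro!: lim)
  have LB: "mlim (\<lambda>t. Bm s2 Sig (xi t)) (Bm s2 Sig xs) F"
    unfolding Bm_def by (intro mlim_add mlim_mult mlim_const LD)
  have dB: "det (Bm s2 Sig xs) \<noteq> 0"
    using Bm_inv[OF s2 sym psd] invertible_det_nz by blast
  have LMb: "mlim (\<lambda>t. M_beta s2 Sig A (xi t)) (M_beta s2 Sig A xs) F"
    unfolding M_beta_W Wm_def by (intro mlim_mult mlim_const LD mlim_inv[OF LB dB])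
  have "posdef (M_beta s2 Sig A xs)"
  proof (rule Mb_posdef[OF s2 sym psd rk])
    show "\<forall>j. xs $ j \<ge> 0" using pos less_imp_le by blast
    fix j k assume "xs $ j = 0" thus "A $ j $ k = 0" using pos by (metis less_irrefl)
  qed
  hence dMb: "det (M_beta s2 Sig A xs) \<noteq> 0" using posdef_det_pos by force
  have dC: "det (s2 *\<^sub>R mat 1 + Sig ** M0 xs) \<noteq> 0"
    using C_inv[OF s2 sym psd pos] invertible_det_nz by blast
  have "transpose (s2 *\<^sub>R mat 1 + Sig ** M0 xs) = s2 *\<^sub>R mat 1 + M0 xs ** Sig"
    by (simp add: transpose_add transpose_scalar matrix_transpose_mul M0_sym sym)
  hence dC': "det (s2 *\<^sub>R mat 1 + M0 xs ** Sig) \<noteq> 0" using dC by (metis det_transpose)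
  have LC: "mlim (\<lambda>t. matrix_inv (s2 *\<^sub>R mat 1 + Sig ** M0 (xi t))) (matrix_inv (s2 *\<^sub>R mat 1 + Sig ** M0 xs)) F"
    by (intro mlim_inv[OF _ dC] mlim_add mlim_mult mlim_const LM)
  have LC': "mlim (\<lambda>t. matrix_inv (s2 *\<^sub>R mat 1 + M0 (xi t) ** Sig)) (matrix_inv (s2 *\<^sub>R mat 1 + M0 xs ** Sig)) F"
    by (intro mlim_inv[OF _ dC'] mlim_add mlim_mult mlim_const LM)
  have "mlim (\<lambda>t. matrix_inv (s2 *\<^sub>R mat 1 + Sig ** M0 (xi t)) ** A ** matrix_inv (M_beta s2 Sig A (xi t))
        ** transpose A ** matrix_inv (s2 *\<^sub>R mat 1 + M0 (xi t) ** Sig))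
     (matrix_inv (s2 *\<^sub>R mat 1 + Sig ** M0 xs) ** A ** matrix_inv (M_beta s2 Sig A xs)
        ** transpose A ** matrix_inv (s2 *\<^sub>R mat 1 + M0 xs ** Sig)) F"
    by (intro mlim_mult mlim_const LC LC' mlim_inv[OF LMb dMb])
  thus ?thesis unfolding psi_def mlim_def by blast
qed

lemma sum_axis: "(\<Sum>i\<in>UNIV. axis j (1::real) $ i) = 1"
  by (simp add: axis_def)

lemma sum_axis_mult: "(\<Sum>i\<in>UNIV. axis j (1::real) $ i * f i) = f j"
  by (simp add: axis_def if_distrib if_distribR cong: if_cong)

lemma opt_dir:
  fixes s2 I :: real and Sig :: "real^'j^'j" and A :: "real^'p^'j" and xs :: "real^'j"
  assumes s2: "s2 > 0" and sym: "transpose Sig = Sig" and psd: "\<forall>x. x \<bullet> (Sig *v x) \<ge> 0"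
    and rk: "rank A = CARD('p)" and des: "is_design I xs" and pos: "\<forall>j. xs $ j > 0"
    and opt: "locally_D_optimal s2 Sig A I xs"
    and jk: "j \<noteq> k"
  shows "psi s2 Sig A xs j \<le> psi s2 Sig A xs k"
proof -
  define d :: "real^'j" where "d = axis j 1 - axis k 1"
  define xi where "xi t = xs + t *\<^sub>R d" for t :: real
  have xi_c: "xi t $ i = xs $ i + t * d $ i" for t i by (simp add: xi_def)
  let ?f = "\<lambda>t. psi s2 Sig A (xi t) j - psi s2 Sig A (xi t) k"
  have main: "?f t \<le> 0" if t0: "0 < t" and tk: "t < xs $ k" for t
  proof -
    have post: "\<forall>i. xi t $ i > 0"
    proof
      fix i
      show "xi t $ i > 0"
      proof -
        have di: "d $ i = (if i = j then 1 else 0) - (if i = k then 1 else 0)"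
          by (simp add: d_def axis_def)
        show ?thesis using pos[rule_format, of i] t0 tk jk unfolding xi_c di
          by (cases "i = j"; cases "i = k") auto
      qed
    qed
    have nnt: "\<forall>i. xi t $ i \<ge> 0" using post less_imp_le by blast
    have dsum: "(\<Sum>i\<in>UNIV. d $ i) = 0" by (simp add: d_def sum_subtractf sum_axis)
    have dest: "is_design I (xi t)"
    proof -
      have "(\<Sum>i\<in>UNIV. xi t $ i) = (\<Sum>i\<in>UNIV. xs $ i) + t * (\<Sum>i\<in>UNIV. d $ i)"
        by (simp add: xi_c sum.distrib sum_distrib_left)
      thus ?thesis using des nnt dsum by (simp add: is_design_def)
    qed
    have est: "estimable A (xi t)" by (rule estimable_full[OF rk post])
    have estx: "estimable A xs" by (rule estimable_full[OF rk pos])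
    have nnx: "\<forall>i. xs $ i \<ge> 0" using pos less_imp_le by blast
    have le1: "ln (det (M_beta s2 Sig A (xi t))) \<le> ln (det (M_beta s2 Sig A xs))"
      using opt dest est by (simp add: locally_D_optimal_def)
    have G: "det (M_beta s2 Sig A xs) \<le> det (M_beta s2 Sig A (xi t)) *
           exp (s2 * (\<Sum>i\<in>UNIV. (xs $ i - xi t $ i) * psi s2 Sig A (xi t) i))"
      by (rule G_ineq[OF s2 sym psd rk post nnx estx])
    have "(\<Sum>i\<in>UNIV. (xs $ i - xi t $ i) * psi s2 Sig A (xi t) i) = - t * ?f t"
    proof -
      have dg: "(\<Sum>i\<in>UNIV. d $ i * g i) = g j - g k" for g :: "'j \<Rightarrow> real"
        by (simp add: d_def sum_subtractf left_diff_distrib sum_axis_mult)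
      have "(\<Sum>i\<in>UNIV. (xs $ i - xi t $ i) * psi s2 Sig A (xi t) i)
          = (\<Sum>i\<in>UNIV. (- t) * (d $ i * psi s2 Sig A (xi t) i))"
        by (rule sum.cong[OF refl]) (simp add: xi_c)
      also have "\<dots> = - t * ?f t" by (simp only: sum_distrib_left[symmetric] dg)
      finally show ?thesis .
    qed
    hence G': "det (M_beta s2 Sig A xs) \<le> det (M_beta s2 Sig A (xi t)) * exp (- (s2 * t * ?f t))"
      using G by (simp add: mult_ac)
    have px: "det (M_beta s2 Sig A xs) > 0"
      using posdef_det_pos[OF Mb_posdef[OF s2 sym psd rk nnx]] estimable_rows[OF estx] by blast
    have pt: "det (M_beta s2 Sig A (xi t)) > 0"
      using posdef_det_pos[OF Mb_posdef[OF s2 sym psd rk nnt]] estimable_rows[OF est] by blast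
    have "ln (det (M_beta s2 Sig A xs)) \<le> ln (det (M_beta s2 Sig A (xi t)) * exp (- (s2 * t * ?f t)))"
      using G' px pt by simp
    also have "\<dots> = ln (det (M_beta s2 Sig A (xi t))) - s2 * t * ?f t"
      using pt by (simp add: ln_mult)
    finally have "s2 * t * ?f t \<le> 0" using le1 by simp
    thus ?thesis using s2 t0 by (simp add: mult_le_0_iff)
  qed
  have lim: "(?f \<longlongrightarrow> psi s2 Sig A (xi 0) j - psi s2 Sig A (xi 0) k) (at_right 0)"
  proof -
    have "((\<lambda>t. xi t $ i) \<longlongrightarrow> xs $ i) (at_right 0)" for i
    proof -
      have "((\<lambda>t. xs $ i + t * d $ i) \<longlongrightarrow> xs $ i + 0 * d $ i) (at_right 0)"
        by (intro tendsto_intros)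
      thus ?thesis by (simp add: xi_c)
    qed
    hence "((\<lambda>t. psi s2 Sig A (xi t) l) \<longlongrightarrow> psi s2 Sig A xs l) (at_right 0)" for l
      by (rule psi_tendsto[OF s2 sym psd rk pos])
    hence "(?f \<longlongrightarrow> psi s2 Sig A xs j - psi s2 Sig A xs k) (at_right 0)"
      by (intro tendsto_diff)
    thus ?thesis by (simp add: xi_def)
  qed
  have ev: "eventually (\<lambda>t. 0 \<ge> ?f t) (at_right (0::real))"
    unfolding eventually_at_right_field using pos[rule_format, of k] main by blast
  have "0 \<ge> psi s2 Sig A (xi 0) j - psi s2 Sig A (xi 0) k"
    by (rule tendsto_upperbound[OF lim ev]) simp
  thus ?thesis by (simp add: xi_def)
qed

theorem corollary1:
  fixes s2 I :: real and Sig :: "real^'j^'j" and A :: "real^'p^'j" and xs :: "real^'j"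
  assumes "CARD('p) \<le> CARD('j)"
    and "s2 > 0" and "I > 0"
    and "transpose Sig = Sig" and "\<forall>x. x \<bullet> (Sig *v x) \<ge> 0"
    and "rank A = CARD('p)"
    and "is_design I xs" and "\<forall>j. xs $ j > 0"
  shows "locally_D_optimal s2 Sig A I xs \<longleftrightarrow>
         (\<forall>j k. I * psi s2 Sig A xs j = I * psi s2 Sig A xs k)"
proof
  assume opt: "locally_D_optimal s2 Sig A I xs"
  show "\<forall>j k. I * psi s2 Sig A xs j = I * psi s2 Sig A xs k"
  proof (intro allI)
    fix j k
    show "I * psi s2 Sig A xs j = I * psi s2 Sig A xs k"
    proof (cases "j = k")
      case False
      have "psi s2 Sig A xs j \<le> psi s2 Sig A xs k"
        using opt_dir[OF assms(2,4,5,6,7,8) opt False] .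
      moreover have "psi s2 Sig A xs k \<le> psi s2 Sig A xs j"
        using False opt_dir[OF assms(2,4,5,6,7,8) opt, of k j] by simp
      ultimately show ?thesis by simp
    qed simp
  qed
next
  assume H: "\<forall>j k. I * psi s2 Sig A xs j = I * psi s2 Sig A xs k"
  have s2: "s2 > 0" and sym: "transpose Sig = Sig" and psd: "\<forall>x. x \<bullet> (Sig *v x) \<ge> 0"
    and rk: "rank A = CARD('p)" and des: "is_design I xs" and pos: "\<forall>j. xs $ j > 0"
    using assms by auto
  fix j0 :: 'j
  have eqp: "psi s2 Sig A xs j = psi s2 Sig A xs j0" for j
  proof -
    have "I * psi s2 Sig A xs j = I * psi s2 Sig A xs j0" using H by blast
    thus ?thesis using assms(3) by simp
  qed
  have estx: "estimable A xs" by (rule estimable_full[OF rk pos])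
  have nnx: "\<forall>i. xs $ i \<ge> 0" using pos less_imp_le by blast
  have px: "det (M_beta s2 Sig A xs) > 0"
    using posdef_det_pos[OF Mb_posdef[OF s2 sym psd rk nnx]] estimable_rows[OF estx] by blast
  show "locally_D_optimal s2 Sig A I xs"
    unfolding locally_D_optimal_def
  proof (intro conjI allI impI des estx)
    fix xi assume xi: "is_design I xi \<and> estimable A xi"
    have nn: "\<forall>i. xi $ i \<ge> 0" and sxi: "(\<Sum>i\<in>UNIV. xi $ i) = I" and est: "estimable A xi"
      using xi by (auto simp: is_design_def)
    have sxs: "(\<Sum>i\<in>UNIV. xs $ i) = I" using des by (simp add: is_design_def)
    have G: "det (M_beta s2 Sig A xi) \<le> det (M_beta s2 Sig A xs) *
           exp (s2 * (\<Sum>i\<in>UNIV. (xi $ i - xs $ i) * psi s2 Sig A xs i))"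
      by (rule G_ineq[OF s2 sym psd rk pos nn est])
    have "(\<Sum>i\<in>UNIV. (xi $ i - xs $ i) * psi s2 Sig A xs i) = (\<Sum>i\<in>UNIV. xi $ i - xs $ i) * psi s2 Sig A xs j0"
    proof -
      have "(\<Sum>i\<in>UNIV. (xi $ i - xs $ i) * psi s2 Sig A xs i) = (\<Sum>i\<in>UNIV. (xi $ i - xs $ i) * psi s2 Sig A xs j0)"
        by (rule sum.cong[OF refl]) (rule arg_cong[OF eqp])
      thus ?thesis by (simp only: sum_distrib_right)
    qed
    also have "\<dots> = 0" using sxi sxs by (simp add: sum_subtractf)
    finally have "det (M_beta s2 Sig A xi) \<le> det (M_beta s2 Sig A xs)" using G by simp
    moreover have "det (M_beta s2 Sig A xi) > 0"
      using posdef_det_pos[OF Mb_posdef[OF s2 sym psd rk nn]] estimable_rows[OF est] by blast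
    ultimately show "ln (det (M_beta s2 Sig A xi)) \<le> ln (det (M_beta s2 Sig A xs))"
      using px by simp
  qed
qed

end
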